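(* For all $N_1,N_2\ge0$, the multiplication morphism $\mathfrak m_{N_1,N_2}:\mathcal M(N_1,K)\times\mathcal M(N_2,K)\to\mathcal M(N_1+N_2,K)$ is dominant.
   Context: $\mathcal M(N,K)=\mathrm{Rep}(N,K)/\!/\mathrm{GL}_N$, with $\mathrm{Rep}(N,K)$ the triples $(B,\psi,\overline\psi)$, $B\in\mathrm{Mat}_{N\times N}(\mathbb C)$, $\psi\in\mathrm{Mat}_{N\times K}$, $\overline\psi\in\mathrm{Mat}_{K\times N}$, and $g\cdot(B,\psi,\overline\psi)=(gBg^{-1},g\psi,\overline\psi g^{-1})$. $\mathfrak m_{N_1,N_2}$ sends $(B^{(1)},\psi^{(1)},\overline\psi^{(1)})\times(B^{(2)},\psi^{(2)},\overline\psi^{(2)})$ to $\left(\begin{bmatrix}B^{(1)}&\psi^{(1)}\overline\psi^{(2)}\\-\psi^{(2)}\overline\psi^{(1)}&B^{(2)}\end{bmatrix},\begin{bmatrix}\psi^{(1)}\\\psi^{(2)}\end{bmatrix},\begin{bmatrix}\overline\psi^{(1)}&\overline\psi^{(2)}\end{bmatrix}\right)$. *)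

theory Defs
  imports Complex_Main
begin

text \<open>Matrices are functions nat => nat => complex; an N x M matrix is one whose
  entries vanish outside the index box {..<N} x {..<M}.\<close>

type_synonym cmat = "nat \<Rightarrow> nat \<Rightarrow> complex"

type_synonym rep = "cmat \<times> cmat \<times> cmat"

definition supported :: "nat \<Rightarrow> nat \<Rightarrow> cmat \<Rightarrow> bool" where
  "supported n m A \<longleftrightarrow> (\<forall>i j. \<not> (i < n \<and> j < m) \<longrightarrow> A i j = 0)"

definition Rep :: "nat \<Rightarrow> nat \<Rightarrow> rep set" where
  "Rep N K = {(B, psi, psib). supported N N B \<and> supported N K psi \<and> supported K N psib}"

definition mmul :: "nat \<Rightarrow> cmat \<Rightarrow> cmat \<Rightarrow> cmat" where
  "mmul n A C = (\<lambda>i j. \<Sum>l<n. A i l * C l j)"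

definition idm :: "nat \<Rightarrow> cmat" where
  "idm n = (\<lambda>i j. if i = j \<and> i < n then 1 else 0)"

definition GL_pair :: "nat \<Rightarrow> cmat \<Rightarrow> cmat \<Rightarrow> bool" where
  "GL_pair N g h \<longleftrightarrow> supported N N g \<and> supported N N h \<and>
     mmul N g h = idm N \<and> mmul N h g = idm N"

definition act :: "nat \<Rightarrow> nat \<Rightarrow> cmat \<Rightarrow> cmat \<Rightarrow> rep \<Rightarrow> rep" where
  "act N K g h x = (case x of (B, psi, psib) \<Rightarrow>
     (mmul N (mmul N g B) h, mmul N g psi, mmul N psib h))"

text \<open>Polynomial functions in the matrix coordinates (the coordinate ring of Rep(N,K)
  is the restriction of these to Rep(N,K)).\<close>
inductive poly_fun :: "(rep \<Rightarrow> complex) \<Rightarrow> bool" where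
  pf_const: "poly_fun (\<lambda>x. c)"
| pf_B: "poly_fun (\<lambda>(B, psi, psib). B i j)"
| pf_psi: "poly_fun (\<lambda>(B, psi, psib). psi i j)"
| pf_psib: "poly_fun (\<lambda>(B, psi, psib). psib i j)"
| pf_add: "poly_fun f \<Longrightarrow> poly_fun g \<Longrightarrow> poly_fun (\<lambda>x. f x + g x)"
| pf_mult: "poly_fun f \<Longrightarrow> poly_fun g \<Longrightarrow> poly_fun (\<lambda>x. f x * g x)"

text \<open>GL_N-invariant polynomial functions on Rep(N,K) = coordinate ring of M(N,K).\<close>
definition invariant_poly :: "nat \<Rightarrow> nat \<Rightarrow> (rep \<Rightarrow> complex) \<Rightarrow> bool" where
  "invariant_poly N K f \<longleftrightarrow> poly_fun f \<and>
     (\<forall>g h x. GL_pair N g h \<and> x \<in> Rep N K \<longrightarrow> f (act N K g h x) = f x)"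

definition mult_map :: "nat \<Rightarrow> nat \<Rightarrow> nat \<Rightarrow> rep \<Rightarrow> rep \<Rightarrow> rep" where
  "mult_map N1 N2 K x1 x2 = (case x1 of (B1, psi1, psib1) \<Rightarrow> case x2 of (B2, psi2, psib2) \<Rightarrow>
     ((\<lambda>i j.
        if i < N1 \<and> j < N1 then B1 i j
        else if i < N1 \<and> N1 \<le> j \<and> j < N1 + N2 then (\<Sum>a<K. psi1 i a * psib2 a (j - N1))
        else if N1 \<le> i \<and> i < N1 + N2 \<and> j < N1 then - (\<Sum>a<K. psi2 (i - N1) a * psib1 a j)
        else if N1 \<le> i \<and> i < N1 + N2 \<and> N1 \<le> j \<and> j < N1 + N2 then B2 (i - N1) (j - N1)
        else 0),
      (\<lambda>i a. if i < N1 then psi1 i a else if i < N1 + N2 then psi2 (i - N1) a else 0),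
      (\<lambda>a i. if i < N1 then psib1 a i else if i < N1 + N2 then psib2 a (i - N1) else 0)))"

text \<open>Dominance of M(N1,K) x M(N2,K) -> M(N1+N2,K) between affine (reduced) varieties
  = injectivity of the comorphism on coordinate rings of invariants.\<close>
definition mult_dominant :: "nat \<Rightarrow> nat \<Rightarrow> nat \<Rightarrow> bool" where
  "mult_dominant N1 N2 K \<longleftrightarrow>
     (\<forall>f. invariant_poly (N1 + N2) K f \<longrightarrow>
        (\<forall>x1\<in>Rep N1 K. \<forall>x2\<in>Rep N2 K. f (mult_map N1 N2 K x1 x2) = 0) \<longrightarrow>
        (\<forall>x\<in>Rep (N1 + N2) K. f x = 0))"

end

theory Submission
  imports Defs "Jordan_Normal_Form.Schur_Decomposition"
begin

lemma sum_single_nz: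
  assumes "finite A" "i \<in> A" "\<And>m. m \<in> A \<Longrightarrow> m \<noteq> i \<Longrightarrow> g m = 0"
  shows "sum g A = g i"
proof -
  have "sum g A = g i + sum g (A - {i})" using assms by (simp add: sum.remove)
  also have "sum g (A - {i}) = 0" using assms by (intro sum.neutral) auto
  finally show ?thesis by simp
qed

definition Qp :: "nat \<Rightarrow> complex mat \<Rightarrow> bool" where
  "Qp n A \<longleftrightarrow> (\<forall>v\<in>carrier_vec n. v \<noteq> 0\<^sub>v n \<longrightarrow>
     (\<exists>l\<in>carrier_vec n. \<exists>\<mu>. transpose_mat A *\<^sub>v l = \<mu> \<cdot>\<^sub>v l \<and> l \<bullet> v \<noteq> 0))"

lemma tri_Qp:
  fixes T :: "complex mat"
  assumes T: "T \<in> carrier_mat n n" and ut: "upper_triangular T"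
    and dist: "\<And>i j. i < n \<Longrightarrow> j < n \<Longrightarrow> i \<noteq> j \<Longrightarrow> T $$ (i,i) \<noteq> T $$ (j,j)"
  shows "Qp n T"
  unfolding Qp_def
proof (intro ballI impI)
  fix v :: "complex vec" assume v: "v \<in> carrier_vec n" and v0: "v \<noteq> 0\<^sub>v n"
  define S where "S = {i. i < n \<and> v $ i \<noteq> 0}"
  have "S \<noteq> {}"
  proof
    assume "S = {}"
    then have "v = 0\<^sub>v n" using v unfolding S_def by (intro eq_vecI) auto
    with v0 show False by simp
  qed
  moreover have fS: "finite S" unfolding S_def by auto
  ultimately have iS: "Max S \<in> S" by simp
  define i where "i = Max S"
  have i: "i < n" "v $ i \<noteq> 0" using iS unfolding i_def S_def by auto
  have vz: "v $ j = 0" if "i < j" "j < n" for j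
  proof (rule ccontr)
    assume "v $ j \<noteq> 0"
    then have "j \<in> S" using that unfolding S_def by auto
    then have "j \<le> i" unfolding i_def using fS by simp
    with that show False by simp
  qed
  define c where "c = T $$ (i,i)"
  define M where "M = T - c \<cdot>\<^sub>m 1\<^sub>m n"
  have M: "M \<in> carrier_mat n n" unfolding M_def using T by auto
  have Mij: "M $$ (a,b) = T $$ (a,b) - (if a = b then c else 0)" if "a < n" "b < n" for a b
    unfolding M_def using that T by auto
  have "upper_triangular M" unfolding upper_triangular_def using M Mij ut T
    unfolding upper_triangular_def by auto
  then have "det M = prod_list (diag_mat M)" using det_upper_triangular M by blast
  also have "\<dots> = 0"
  proof -
    have "M $$ (i,i) \<in> set (diag_mat M)" unfolding diag_mat_def using M i by auto
    moreover have "M $$ (i,i) = 0" using Mij i c_def by simp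
    ultimately show ?thesis by (simp add: prod_list_zero_iff)
  qed
  finally have "det (transpose_mat M) = 0" using det_transpose[OF M] by simp
  then obtain u where u: "u \<in> carrier_vec n" "u \<noteq> 0\<^sub>v n" "transpose_mat M *\<^sub>v u = 0\<^sub>v n"
    using det_0_iff_vec_prod_zero_field[of "transpose_mat M" n] M by auto
  have ueq: "(\<Sum>m<n. M $$ (m,j) * u $ m) = 0" if j: "j < n" for j
  proof -
    have "(transpose_mat M *\<^sub>v u) $ j = 0" using u(3) j by simp
    then have "col M j \<bullet> u = 0" using j M by simp
    moreover have "col M j \<bullet> u = (\<Sum>m<n. M $$ (m,j) * u $ m)"
      unfolding scalar_prod_def using j M u(1) by (auto simp: lessThan_atLeast0 intro!: sum.cong)
    ultimately show ?thesis by simp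
  qed
  have eig: "transpose_mat T *\<^sub>v u = c \<cdot>\<^sub>v u"
  proof (rule eq_vecI)
    fix j assume "j < dim_vec (c \<cdot>\<^sub>v u)"
    then have j: "j < n" using u by simp
    have "(\<Sum>m<n. M $$ (m,j) * u $ m) = (\<Sum>m<n. T $$ (m,j) * u $ m - (if m = j then c * u $ m else 0))"
      using j by (intro sum.cong) (auto simp: Mij algebra_simps)
    also have "\<dots> = (\<Sum>m<n. T $$ (m,j) * u $ m) - c * u $ j"
      using j by (simp add: sum_subtractf)
    finally have "(\<Sum>m<n. T $$ (m,j) * u $ m) = c * u $ j" using ueq[OF j] by simp
    moreover have "col T j \<bullet> u = (\<Sum>m<n. T $$ (m,j) * u $ m)"
      unfolding scalar_prod_def using j T u(1) by (auto simp: lessThan_atLeast0 intro!: sum.cong)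
    ultimately show "(transpose_mat T *\<^sub>v u) $ j = (c \<cdot>\<^sub>v u) $ j"
      using j T u(1) by simp
  next
    show "dim_vec (transpose_mat T *\<^sub>v u) = dim_vec (c \<cdot>\<^sub>v u)" using T u by simp
  qed
  define S2 where "S2 = {j. j < n \<and> u $ j \<noteq> 0}"
  have "S2 \<noteq> {}"
  proof
    assume "S2 = {}"
    then have "u = 0\<^sub>v n" using u unfolding S2_def by (intro eq_vecI) auto
    with u show False by simp
  qed
  moreover have fS2: "finite S2" unfolding S2_def by auto
  ultimately have jS: "Min S2 \<in> S2" by simp
  define j0 where "j0 = Min S2"
  have j0: "j0 < n" "u $ j0 \<noteq> 0" using jS unfolding j0_def S2_def by auto
  have uz: "u $ m = 0" if "m < j0" for m
  proof (rule ccontr)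
    assume "u $ m \<noteq> 0"
    then have "m \<in> S2" using that j0 unfolding S2_def by auto
    then have "j0 \<le> m" unfolding j0_def using fS2 by simp
    with that show False by simp
  qed
  have "(\<Sum>m<n. M $$ (m,j0) * u $ m) = M $$ (j0,j0) * u $ j0"
  proof (rule sum_single_nz)
    fix m assume m: "m \<in> {..<n}" "m \<noteq> j0"
    show "M $$ (m,j0) * u $ m = 0"
    proof (cases "m < j0")
      case True then show ?thesis by (simp add: uz)
    next
      case False
      then have "j0 < m" using m by simp
      then have "M $$ (m,j0) = 0" using \<open>upper_triangular M\<close> M m unfolding upper_triangular_def by auto
      then show ?thesis by simp
    qed
  qed (use j0 in auto)
  then have "M $$ (j0,j0) = 0" using ueq[OF j0(1)] j0 by simp
  then have "T $$ (j0,j0) = T $$ (i,i)" using Mij j0 c_def by simp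
  then have ji: "j0 = i" using dist[OF j0(1) i(1)] by blast
  have "u \<bullet> v = (\<Sum>m<n. u $ m * v $ m)" using v unfolding scalar_prod_def by (simp add: lessThan_atLeast0)
  also have "\<dots> = u $ i * v $ i"
  proof (rule sum_single_nz)
    fix m assume m: "m \<in> {..<n}" "m \<noteq> i"
    show "u $ m * v $ m = 0"
      using m uz[of m] vz[of m] ji by (cases "m < i") auto
  qed (use i in auto)
  finally have "u \<bullet> v \<noteq> 0" using i j0 ji by simp
  then show "\<exists>l\<in>carrier_vec n. \<exists>\<mu>. transpose_mat T *\<^sub>v l = \<mu> \<cdot>\<^sub>v l \<and> l \<bullet> v \<noteq> 0"
    using eig u(1) by blast
qed

lemma Qp_sim:
  fixes T P Q :: "complex mat"
  assumes QpT: "Qp n T" and T: "T \<in> carrier_mat n n" and P: "P \<in> carrier_mat n n"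
    and Q: "Q \<in> carrier_mat n n" and PQ: "P * Q = 1\<^sub>m n" and QP: "Q * P = 1\<^sub>m n"
  shows "Qp n (P * T * Q)"
  unfolding Qp_def
proof (intro ballI impI)
  fix v :: "complex vec" assume v: "v \<in> carrier_vec n" and v0: "v \<noteq> 0\<^sub>v n"
  define w where "w = Q *\<^sub>v v"
  have w: "w \<in> carrier_vec n" unfolding w_def using Q v by simp
  have "w \<noteq> 0\<^sub>v n"
  proof
    assume "w = 0\<^sub>v n"
    have "v = (P * Q) *\<^sub>v v" using PQ v by simp
    also have "\<dots> = P *\<^sub>v w" unfolding w_def using P Q v by simp
    also have "\<dots> = 0\<^sub>v n" using \<open>w = 0\<^sub>v n\<close> P by auto
    finally show False using v0 by simp
  qed
  then obtain l \<mu> where l: "l \<in> carrier_vec n" "transpose_mat T *\<^sub>v l = \<mu> \<cdot>\<^sub>v l" "l \<bullet> w \<noteq> 0"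
    using QpT w unfolding Qp_def by blast
  define l' where "l' = transpose_mat Q *\<^sub>v l"
  have l': "l' \<in> carrier_vec n" unfolding l'_def using Q l by simp
  have tr: "transpose_mat (P * T * Q) = transpose_mat Q * (transpose_mat T * transpose_mat P)"
  proof -
    have "transpose_mat (P * T * Q) = transpose_mat Q * transpose_mat (P * T)"
      using P T Q by (intro transpose_mult[of _ n n]) auto
    also have "transpose_mat (P * T) = transpose_mat T * transpose_mat P"
      using P T by (intro transpose_mult[of _ n n]) auto
    finally show ?thesis .
  qed
  have PtQt: "transpose_mat P * transpose_mat Q = 1\<^sub>m n"
    using transpose_mult[OF Q P] QP by simp
  have "transpose_mat (P * T * Q) *\<^sub>v l' = transpose_mat Q *\<^sub>v (transpose_mat T *\<^sub>v ((transpose_mat P * transpose_mat Q) *\<^sub>v l))"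
  proof -
    have Qt: "transpose_mat Q \<in> carrier_mat n n" and Tt: "transpose_mat T \<in> carrier_mat n n"
      and Pt: "transpose_mat P \<in> carrier_mat n n" using P Q T by auto
    have l2: "transpose_mat Q *\<^sub>v l \<in> carrier_vec n" using Qt l by simp
    show ?thesis unfolding tr l'_def
      using assoc_mult_mat_vec[OF Qt mult_carrier_mat[OF Tt Pt] l2]
        assoc_mult_mat_vec[OF Tt Pt l2] assoc_mult_mat_vec[OF Pt Qt l(1)] by simp
  qed
  also have "\<dots> = transpose_mat Q *\<^sub>v (\<mu> \<cdot>\<^sub>v l)" using PtQt l by simp
  also have "\<dots> = \<mu> \<cdot>\<^sub>v l'" unfolding l'_def using Q l by (simp add: mult_mat_vec)
  finally have e: "transpose_mat (P * T * Q) *\<^sub>v l' = \<mu> \<cdot>\<^sub>v l'" .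
  have "l' \<bullet> v = l \<bullet> w" unfolding l'_def w_def using transpose_vec_mult_scalar[OF Q v l(1)] .
  with e l' l show "\<exists>l\<in>carrier_vec n. \<exists>\<mu>. transpose_mat (P * T * Q) *\<^sub>v l = \<mu> \<cdot>\<^sub>v l \<and> l \<bullet> v \<noteq> 0"
    by auto
qed

lemma density:
  fixes A :: "complex mat" assumes A: "A \<in> carrier_mat n n"
  shows "\<exists>E. (\<forall>k. E k \<in> carrier_mat n n) \<and> (\<forall>i j. i < n \<longrightarrow> j < n \<longrightarrow> (\<lambda>k. E k $$ (i,j)) \<longlonglongrightarrow> 0)
     \<and> (\<forall>k. Qp n (A + E k))"
proof -
  obtain es where es: "char_poly A = (\<Prod>a\<leftarrow>es. [:-a,1:])" using char_poly_factorized[OF A] by blast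
  obtain B where B: "B \<in> carrier_mat n n" "upper_triangular B" "similar_mat A B"
    using schur_decomposition_exists[OF A es] by blast
  then obtain P Q where "similar_mat_wit A B P Q" unfolding similar_mat_def by blast
  then have P: "P \<in> carrier_mat n n" and Q: "Q \<in> carrier_mat n n" and PQ: "P * Q = 1\<^sub>m n"
    and QP: "Q * P = 1\<^sub>m n" and AeqL: "A = P * B * Q"
    unfolding similar_mat_wit_def Let_def using A by auto
  define bad where "bad = (\<lambda>(i,j). Re ((B $$ (j,j) - B $$ (i,i)) / (of_nat i - of_nat j))) ` ({..<n} \<times> {..<n})"
  have fin: "finite bad" unfolding bad_def by auto
  have "\<exists>c::real. 0 < c \<and> c < 1 / (real k + 1) \<and> c \<notin> bad" for k
  proof -
    have "infinite {0<..<1 / (real k + 1)}" by (intro infinite_Ioo) auto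
    then have "infinite ({0<..<1 / (real k + 1)} - bad)" using Diff_infinite_finite[OF fin] by blast
    then obtain x where "x \<in> {0<..<1 / (real k + 1)} - bad" using infinite_imp_nonempty by blast
    then show ?thesis by auto
  qed
  then obtain c where c: "\<And>k. 0 < c k \<and> c k < 1 / (real k + 1) \<and> c k \<notin> bad" by metis
  define Dn where "Dn = mat n n (\<lambda>(i,j). if i = j then (of_nat i :: complex) else 0)"
  have Dn: "Dn \<in> carrier_mat n n" unfolding Dn_def by auto
  define E where "E k = complex_of_real (c k) \<cdot>\<^sub>m (P * Dn * Q)" for k
  have Ec: "E k \<in> carrier_mat n n" for k unfolding E_def using P Dn Q by auto
  have c0: "c \<longlonglongrightarrow> 0"
  proof (rule real_tendsto_sandwich[of "\<lambda>_. 0" _ _ "\<lambda>k. inverse (real (Suc k))"])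
    have "0 \<le> c k" for k using c[of k] by simp
    then show "\<forall>\<^sub>F k in sequentially. 0 \<le> c k" by simp
    have "c k \<le> inverse (real (Suc k))" for k
    proof -
      have "1 / (real k + 1) = inverse (real (Suc k))" by (simp add: inverse_eq_divide add.commute)
      then show ?thesis using c[of k] by simp
    qed
    then show "\<forall>\<^sub>F k in sequentially. c k \<le> inverse (real (Suc k))" by simp
    show "(\<lambda>_. 0::real) \<longlonglongrightarrow> 0" by simp
    show "(\<lambda>k. inverse (real (Suc k))) \<longlonglongrightarrow> 0" by (rule LIMSEQ_inverse_real_of_nat)
  qed
  have conv: "(\<lambda>k. E k $$ (i,j)) \<longlonglongrightarrow> 0" if "i < n" "j < n" for i j
  proof -
    have "(\<lambda>k. complex_of_real (c k) * (P * Dn * Q) $$ (i,j)) \<longlonglongrightarrow> 0"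
    proof -
      have "(\<lambda>k. complex_of_real (c k)) \<longlonglongrightarrow> 0" using tendsto_of_real[OF c0, where 'a=complex] by simp
      then show ?thesis by (rule tendsto_mult_left_zero)
    qed
    moreover have "E k $$ (i,j) = complex_of_real (c k) * (P * Dn * Q) $$ (i,j)" for k
      unfolding E_def using that P Dn Q by auto
    ultimately show ?thesis by simp
  qed
  have QpE: "Qp n (A + E k)" for k
  proof -
    define s where "s = complex_of_real (c k)"
    define T where "T = B + s \<cdot>\<^sub>m Dn"
    have T: "T \<in> carrier_mat n n" unfolding T_def using B Dn by auto
    have "P * T * Q = P * B * Q + s \<cdot>\<^sub>m (P * Dn * Q)"
    proof -
      have "P * T = P * B + s \<cdot>\<^sub>m (P * Dn)" unfolding T_def
        using P B Dn by (simp add: mult_add_distrib_mat[of _ n n] mult_smult_distrib[of _ n n])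
      then have "P * T * Q = (P * B + s \<cdot>\<^sub>m (P * Dn)) * Q" by simp
      also have "\<dots> = P * B * Q + (s \<cdot>\<^sub>m (P * Dn)) * Q"
        using P B Dn Q by (intro add_mult_distrib_mat[of _ n n]) auto
      also have "(s \<cdot>\<^sub>m (P * Dn)) * Q = s \<cdot>\<^sub>m (P * Dn * Q)"
        using P Dn Q by (intro mult_smult_assoc_mat[of _ n n]) auto
      finally show ?thesis .
    qed
    then have eq: "A + E k = P * T * Q" unfolding AeqL E_def s_def by simp
    have Tij: "T $$ (i,j) = B $$ (i,j) + (if i = j then s * of_nat i else 0)" if "i < n" "j < n" for i j
      unfolding T_def Dn_def using that B by auto
    have ut: "upper_triangular T" using B(2) T Tij B(1) unfolding upper_triangular_def by auto
    have dist: "T $$ (i,i) \<noteq> T $$ (j,j)" if ij: "i < n" "j < n" "i \<noteq> j" for i j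
    proof
      assume "T $$ (i,i) = T $$ (j,j)"
      then have e: "s * (of_nat i - of_nat j) = B $$ (j,j) - B $$ (i,i)"
        using Tij ij by (simp add: algebra_simps)
      have nz: "(of_nat i - of_nat j :: complex) \<noteq> 0" using ij by simp
      then have "s = (B $$ (j,j) - B $$ (i,i)) / (of_nat i - of_nat j)"
        using e by (simp add: field_simps)
      then have "c k = Re ((B $$ (j,j) - B $$ (i,i)) / (of_nat i - of_nat j))"
        unfolding s_def by (metis Re_complex_of_real)
      then have "c k \<in> bad" unfolding bad_def using ij by (intro rev_image_eqI[of "(i,j)"]) auto
      with c show False by blast
    qed
    have "Qp n T" by (rule tri_Qp[OF T ut dist])
    then show ?thesis unfolding eq by (rule Qp_sim[OF _ T P Q PQ QP])
  qed
  show ?thesis using Ec conv QpE by blast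
qed

lemma mult_entry:
  fixes X Y :: "complex mat"
  assumes "X \<in> carrier_mat n n" "Y \<in> carrier_mat n n" "i < n" "j < n"
  shows "(X * Y) $$ (i,j) = (\<Sum>m<n. X $$ (i,m) * Y $$ (m,j))"
  using assms by (auto simp: scalar_prod_def lessThan_atLeast0 intro!: sum.cong)

lemma mvec_entry:
  fixes M :: "complex mat"
  assumes "M \<in> carrier_mat n n" "w \<in> carrier_vec n" "p < n"
  shows "(M *\<^sub>v w) $ p = (\<Sum>m<n. M $$ (p,m) * w $ m)"
  using assms by (auto simp: scalar_prod_def lessThan_atLeast0 intro!: sum.cong)

lemma sum_two:
  fixes g :: "nat \<Rightarrow> complex"
  assumes "a < n" "b < n" "\<And>m. m < n \<Longrightarrow> g m = (if m = a then x else 0) + (if m = b then y else 0)"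
  shows "(\<Sum>m<n. g m) = x + y"
proof -
  have "(\<Sum>m<n. g m) = (\<Sum>m<n. (if m = a then x else 0) + (if m = b then y else 0))"
    using assms(3) by (intro sum.cong) auto
  also have "\<dots> = x + y" using assms(1,2) by (simp add: sum.distrib)
  finally show ?thesis .
qed

lemma conj_assoc5:
  fixes R Q X P Ri :: "complex mat"
  assumes "R \<in> carrier_mat n n" "Q \<in> carrier_mat n n" "X \<in> carrier_mat n n" "P \<in> carrier_mat n n"
    "Ri \<in> carrier_mat n n"
  shows "R * Q * X * (P * Ri) = R * (Q * X * P) * Ri"
  using assms by (simp add: assoc_mult_mat[of _ n n _ n _ n])

lemma construct:
  fixes Ap Am :: "complex mat"
  assumes Ap: "Ap \<in> carrier_mat n n" and Am: "Am \<in> carrier_mat n n" and n: "0 < n"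
    and QpAm: "Qp n Am"
  shows "\<exists>G H. G \<in> carrier_mat n n \<and> H \<in> carrier_mat n n \<and> G * H = 1\<^sub>m n \<and> H * G = 1\<^sub>m n
    \<and> (\<forall>i. 0 < i \<and> i < n \<longrightarrow> (G * Ap * H) $$ (i,0) = 0)
    \<and> (\<forall>j. 0 < j \<and> j < n \<longrightarrow> (G * Am * H) $$ (0,j) = 0)"
proof -
  obtain es where es: "char_poly Ap = (\<Prod>a\<leftarrow>es. [:-a,1:])" using char_poly_factorized[OF Ap] by blast
  obtain B where B: "B \<in> carrier_mat n n" "upper_triangular B" "similar_mat Ap B"
    using schur_decomposition_exists[OF Ap es] by blast
  then obtain P Q where "similar_mat_wit Ap B P Q" unfolding similar_mat_def by blast
  then have P: "P \<in> carrier_mat n n" and Q: "Q \<in> carrier_mat n n" and PQ: "P * Q = 1\<^sub>m n"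
    and QP: "Q * P = 1\<^sub>m n" and ApeqL: "Ap = P * B * Q"
    unfolding similar_mat_wit_def Let_def using Ap by auto
  define e0 where "e0 = (unit_vec n 0 :: complex vec)"
  have e0: "e0 \<in> carrier_vec n" unfolding e0_def by simp
  define v where "v = P *\<^sub>v e0"
  have v: "v \<in> carrier_vec n" unfolding v_def using P e0 by simp
  have "v \<noteq> 0\<^sub>v n"
  proof
    assume v0: "v = 0\<^sub>v n"
    have "e0 = (Q * P) *\<^sub>v e0" using QP e0 by simp
    also have "\<dots> = Q *\<^sub>v v" unfolding v_def using Q P e0 by simp
    also have "\<dots> = 0\<^sub>v n" using v0 Q by auto
    finally have "e0 $ 0 = 0" using n by simp
    then show False unfolding e0_def using n by simp
  qed
  then obtain l \<mu> where l: "l \<in> carrier_vec n" "transpose_mat Am *\<^sub>v l = \<mu> \<cdot>\<^sub>v l" "l \<bullet> v \<noteq> 0"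
    using QpAm v unfolding Qp_def by blast
  define l' where "l' = transpose_mat P *\<^sub>v l"
  have l': "l' \<in> carrier_vec n" unfolding l'_def using P l by simp
  have "l' $ 0 = l' \<bullet> e0" unfolding e0_def using n by simp
  also have "\<dots> = l \<bullet> v" unfolding l'_def v_def by (rule transpose_vec_mult_scalar[OF P e0 l(1)])
  finally have l'0: "l' $ 0 = l \<bullet> v" .
  define cc where "cc = l' $ 0"
  have cc: "cc \<noteq> 0" unfolding cc_def l'0 using l by simp
  define R where "R = mat n n (\<lambda>(i,j). if i = 0 then l' $ j / cc else if i = j then 1 else (0::complex))"
  define Ri where "Ri = mat n n (\<lambda>(i,j). if i = 0 then (if j = 0 then 1 else - (l' $ j / cc))
     else if i = j then 1 else (0::complex))"
  have R: "R \<in> carrier_mat n n" unfolding R_def by simp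
  have Ri: "Ri \<in> carrier_mat n n" unfolding Ri_def by simp
  have Rij: "R $$ (i,j) = (if i = 0 then l' $ j / cc else if i = j then 1 else 0)" if "i < n" "j < n" for i j
    unfolding R_def using that by simp
  have Riij: "Ri $$ (i,j) = (if i = 0 then (if j = 0 then 1 else - (l' $ j / cc)) else if i = j then 1 else 0)"
    if "i < n" "j < n" for i j
    unfolding Ri_def using that by simp
  have RRi: "R * Ri = 1\<^sub>m n"
  proof (rule eq_matI)
    fix i j assume ij: "i < dim_row (1\<^sub>m n)" "j < dim_col (1\<^sub>m n)"
    then have i: "i < n" and j: "j < n" by auto
    have "(R * Ri) $$ (i,j) = (\<Sum>m<n. R $$ (i,m) * Ri $$ (m,j))" using mult_entry[OF R Ri i j] .
    also have "\<dots> = (if i = j then 1 else 0)"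
    proof (cases "i = 0")
      case True
      show ?thesis
      proof (cases "j = 0")
        case True
        have "(\<Sum>m<n. R $$ (i,m) * Ri $$ (m,j)) = l' $ 0 / cc + 0"
          by (rule sum_two[of 0 n 0], use n in simp, use n in simp, auto simp: Rij Riij \<open>i = 0\<close> True)
        then show ?thesis using cc True \<open>i = 0\<close> unfolding cc_def by simp
      next
        case False
        have "(\<Sum>m<n. R $$ (i,m) * Ri $$ (m,j)) = - (l' $ j / cc) + l' $ j / cc"
          by (rule sum_two[of 0 n j], use n j in simp, use j in simp,
              auto simp: Rij Riij \<open>i = 0\<close> False j cc_def[symmetric] cc)
        then show ?thesis using False \<open>i = 0\<close> by simp
      qed
    next
      case False
      have "(\<Sum>m<n. R $$ (i,m) * Ri $$ (m,j)) = Ri $$ (i,j) + 0"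
        by (rule sum_two[of i n i], use i in simp, use i in simp, auto simp: Rij False i)
      then show ?thesis using False i j by (simp add: Riij)
    qed
    finally show "(R * Ri) $$ (i,j) = 1\<^sub>m n $$ (i,j)" using i j by simp
  qed (use R Ri in auto)
  have RiR: "Ri * R = 1\<^sub>m n"
  proof (rule eq_matI)
    fix i j assume ij: "i < dim_row (1\<^sub>m n)" "j < dim_col (1\<^sub>m n)"
    then have i: "i < n" and j: "j < n" by auto
    have "(Ri * R) $$ (i,j) = (\<Sum>m<n. Ri $$ (i,m) * R $$ (m,j))" using mult_entry[OF Ri R i j] .
    also have "\<dots> = (if i = j then 1 else 0)"
    proof (cases "i = 0")
      case True
      show ?thesis
      proof (cases "j = 0")
        case True
        have "(\<Sum>m<n. Ri $$ (i,m) * R $$ (m,j)) = l' $ 0 / cc + 0"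
          by (rule sum_two[of 0 n 0], use n in simp, use n in simp, auto simp: Rij Riij \<open>i = 0\<close> True)
        then show ?thesis using cc True \<open>i = 0\<close> unfolding cc_def by simp
      next
        case False
        have "(\<Sum>m<n. Ri $$ (i,m) * R $$ (m,j)) = l' $ j / cc + - (l' $ j / cc)"
          by (rule sum_two[of 0 n j], use n j in simp, use j in simp,
              auto simp: Rij Riij \<open>i = 0\<close> False j cc_def[symmetric] cc)
        then show ?thesis using False \<open>i = 0\<close> by simp
      qed
    next
      case False
      have "(\<Sum>m<n. Ri $$ (i,m) * R $$ (m,j)) = R $$ (i,j) + 0"
        by (rule sum_two[of i n i], use i in simp, use i in simp, auto simp: Riij False i)
      then show ?thesis using False i j by (simp add: Rij)
    qed
    finally show "(Ri * R) $$ (i,j) = 1\<^sub>m n $$ (i,j)" using i j by simp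
  qed (use R Ri in auto)
  define G where "G = R * Q"
  define H where "H = P * Ri"
  have G: "G \<in> carrier_mat n n" unfolding G_def using R Q by simp
  have H: "H \<in> carrier_mat n n" unfolding H_def using P Ri by simp
  have GH: "G * H = 1\<^sub>m n"
  proof -
    have "G * H = R * ((Q * P) * Ri)" unfolding G_def H_def using R Q P Ri
      by (simp add: assoc_mult_mat[of _ n n _ n _ n])
    then show ?thesis using QP RRi Ri by simp
  qed
  have HG: "H * G = 1\<^sub>m n"
  proof -
    have "H * G = P * ((Ri * R) * Q)" unfolding G_def H_def using R Q P Ri
      by (simp add: assoc_mult_mat[of _ n n _ n _ n])
    then show ?thesis using PQ RiR Q by simp
  qed
  have conj: "G * X * H = R * (Q * X * P) * Ri" if "X \<in> carrier_mat n n" for X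
    unfolding G_def H_def using conj_assoc5[OF R Q that P Ri] .
  have QApP: "Q * Ap * P = B"
  proof -
    have "Q * Ap * P = (Q * P) * B * (Q * P)" unfolding ApeqL using Q P B
      by (simp add: assoc_mult_mat[of _ n n _ n _ n])
    then show ?thesis using QP B by simp
  qed
  have c1: "(G * Ap * H) $$ (i,0) = 0" if i: "0 < i" "i < n" for i
  proof -
    have RB: "R * B \<in> carrier_mat n n" using R B by simp
    have "(G * Ap * H) $$ (i,0) = (R * B * Ri) $$ (i,0)" using conj[OF Ap] QApP by simp
    also have "\<dots> = (\<Sum>m<n. (R * B) $$ (i,m) * Ri $$ (m,0))" using mult_entry[OF RB Ri i(2) n] .
    also have "\<dots> = (R * B) $$ (i,0) + 0"
      by (rule sum_two[of 0 n 0], use n in simp, use n in simp, auto simp: Riij)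
    also have "(R * B) $$ (i,0) = (\<Sum>m<n. R $$ (i,m) * B $$ (m,0))" using mult_entry[OF R B(1) i(2) n] .
    also have "\<dots> = B $$ (i,0) + 0"
      by (rule sum_two[of i n i], use i in simp, use i in simp, use i in \<open>auto simp: Rij\<close>)
    also have "B $$ (i,0) = 0" using B(2) B(1) i unfolding upper_triangular_def by auto
    finally show ?thesis by simp
  qed
  define Z where "Z = Q * Am * P"
  have Z: "Z \<in> carrier_mat n n" unfolding Z_def using Q Am P by simp
  have Zt: "transpose_mat Z *\<^sub>v l' = \<mu> \<cdot>\<^sub>v l'"
  proof -
    have Qt: "transpose_mat Q \<in> carrier_mat n n" and Amt: "transpose_mat Am \<in> carrier_mat n n"
      and Pt: "transpose_mat P \<in> carrier_mat n n" using P Q Am by auto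
    have tr: "transpose_mat Z = transpose_mat P * (transpose_mat Am * transpose_mat Q)"
    proof -
      have "transpose_mat Z = transpose_mat P * transpose_mat (Q * Am)"
        unfolding Z_def using P Am Q by (intro transpose_mult[of _ n n]) auto
      also have "transpose_mat (Q * Am) = transpose_mat Am * transpose_mat Q"
        using Q Am by (intro transpose_mult[of _ n n]) auto
      finally show ?thesis .
    qed
    have QtPt: "transpose_mat Q * transpose_mat P = 1\<^sub>m n"
      using transpose_mult[OF P Q] PQ by simp
    have l2: "transpose_mat P *\<^sub>v l \<in> carrier_vec n" using Pt l by simp
    have "transpose_mat Z *\<^sub>v l' = transpose_mat P *\<^sub>v (transpose_mat Am *\<^sub>v ((transpose_mat Q * transpose_mat P) *\<^sub>v l))"
      unfolding tr l'_def
      using assoc_mult_mat_vec[OF Pt mult_carrier_mat[OF Amt Qt] l2]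
        assoc_mult_mat_vec[OF Amt Qt l2] assoc_mult_mat_vec[OF Qt Pt l(1)] by simp
    also have "\<dots> = transpose_mat P *\<^sub>v (\<mu> \<cdot>\<^sub>v l)" using QtPt l by simp
    also have "\<dots> = \<mu> \<cdot>\<^sub>v l'" unfolding l'_def using P l by (simp add: mult_mat_vec)
    finally show ?thesis .
  qed
  have RZ: "(R * Z) $$ (0,p) = \<mu> * R $$ (0,p)" if p: "p < n" for p
  proof -
    have "(R * Z) $$ (0,p) = (\<Sum>m<n. R $$ (0,m) * Z $$ (m,p))" using mult_entry[OF R Z n p] .
    also have "\<dots> = (\<Sum>m<n. transpose_mat Z $$ (p,m) * l' $ m) / cc"
      by (simp add: sum_divide_distrib Rij p) (intro sum.cong, use Z p in auto)
    also have "(\<Sum>m<n. transpose_mat Z $$ (p,m) * l' $ m) = (transpose_mat Z *\<^sub>v l') $ p"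
      using mvec_entry[of "transpose_mat Z" n l' p] Z l' p by simp
    also have "\<dots> = \<mu> * l' $ p" using Zt l' p by simp
    finally show ?thesis using Rij[OF n p] by simp
  qed
  have c2: "(G * Am * H) $$ (0,j) = 0" if j: "0 < j" "j < n" for j
  proof -
    have RZc: "R * Z \<in> carrier_mat n n" using R Z by simp
    have "(G * Am * H) $$ (0,j) = (R * Z * Ri) $$ (0,j)" using conj[OF Am] unfolding Z_def by simp
    also have "\<dots> = (\<Sum>m<n. (R * Z) $$ (0,m) * Ri $$ (m,j))" using mult_entry[OF RZc Ri n j(2)] .
    also have "\<dots> = \<mu> * (\<Sum>m<n. R $$ (0,m) * Ri $$ (m,j))"
      by (simp add: sum_distrib_left RZ mult.assoc)
    also have "(\<Sum>m<n. R $$ (0,m) * Ri $$ (m,j)) = (R * Ri) $$ (0,j)" using mult_entry[OF R Ri n j(2)] by simp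
    also have "\<dots> = 0" using RRi j by simp
    finally show ?thesis by simp
  qed
  show ?thesis using G H GH HG c1 c2 by blast
qed

lemma pf_fst: "poly_fun (\<lambda>x. fst x i j)"
proof -
  have "(\<lambda>x. fst x i j) = (\<lambda>(B, psi, psib). B i j)" by auto
  then show ?thesis using pf_B by metis
qed

lemma pf_fst_snd: "poly_fun (\<lambda>x. fst (snd x) i j)"
proof -
  have "(\<lambda>x. fst (snd x) i j) = (\<lambda>(B, psi, psib). psi i j)" by auto
  then show ?thesis using pf_psi by metis
qed

lemma pf_snd_snd: "poly_fun (\<lambda>x. snd (snd x) i j)"
proof -
  have "(\<lambda>x. snd (snd x) i j) = (\<lambda>(B, psi, psib). psib i j)" by auto
  then show ?thesis using pf_psib by metis
qed

lemma pf_if: "poly_fun f \<Longrightarrow> poly_fun g \<Longrightarrow> poly_fun (\<lambda>x. if P then f x else g x)"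
  by (cases P) auto

lemma pf_sum: "(\<And>a. poly_fun (F a)) \<Longrightarrow> poly_fun (\<lambda>x. \<Sum>a<(n::nat). F a x)"
proof (induction n)
  case 0 then show ?case using pf_const[of 0] by simp
next
  case (Suc n)
  then have "poly_fun (\<lambda>x. (\<Sum>a<n. F a x) + F n x)" by (intro pf_add) auto
  then show ?case by simp
qed

lemma pf_neg: "poly_fun f \<Longrightarrow> poly_fun (\<lambda>x. - f x)"
proof -
  assume "poly_fun f"
  then have "poly_fun (\<lambda>x. (-1) * f x)" by (intro pf_mult pf_const)
  then show ?thesis by simp
qed

lemma pf_comp_mult_map:
  assumes "poly_fun f"
  shows "poly_fun (\<lambda>x2. f (mult_map N1 N2 K x1 x2))"
  using assms
proof (induction f rule: poly_fun.induct)
  case (pf_const c) then show ?case by (rule poly_fun.pf_const)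
next
  case (pf_B i j)
  obtain B1 p1 q1 where x1: "x1 = (B1, p1, q1)" by (cases x1) auto
  have "(\<lambda>x2. case mult_map N1 N2 K x1 x2 of (B, psi, psib) \<Rightarrow> B i j) =
    (\<lambda>x2. if i < N1 \<and> j < N1 then B1 i j
        else if i < N1 \<and> N1 \<le> j \<and> j < N1 + N2 then (\<Sum>a<K. p1 i a * snd (snd x2) a (j - N1))
        else if N1 \<le> i \<and> i < N1 + N2 \<and> j < N1 then - (\<Sum>a<K. fst (snd x2) (i - N1) a * q1 a j)
        else if N1 \<le> i \<and> i < N1 + N2 \<and> N1 \<le> j \<and> j < N1 + N2 then fst x2 (i - N1) (j - N1)
        else 0)"
    unfolding x1 mult_map_def by (auto simp: split_beta)
  moreover have "poly_fun \<dots>"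
    by (intro pf_if poly_fun.pf_const pf_sum pf_neg pf_mult pf_fst pf_fst_snd pf_snd_snd)
  ultimately show ?case by metis
next
  case (pf_psi i j)
  obtain B1 p1 q1 where x1: "x1 = (B1, p1, q1)" by (cases x1) auto
  have "(\<lambda>x2. case mult_map N1 N2 K x1 x2 of (B, psi, psib) \<Rightarrow> psi i j) =
    (\<lambda>x2. if i < N1 then p1 i j else if i < N1 + N2 then fst (snd x2) (i - N1) j else 0)"
    unfolding x1 mult_map_def by (auto simp: split_beta)
  moreover have "poly_fun \<dots>"
    by (intro pf_if poly_fun.pf_const pf_fst_snd)
  ultimately show ?case by metis
next
  case (pf_psib i j)
  obtain B1 p1 q1 where x1: "x1 = (B1, p1, q1)" by (cases x1) auto
  have "(\<lambda>x2. case mult_map N1 N2 K x1 x2 of (B, psi, psib) \<Rightarrow> psib i j) =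
    (\<lambda>x2. if j < N1 then q1 i j else if j < N1 + N2 then snd (snd x2) i (j - N1) else 0)"
    unfolding x1 mult_map_def by (auto simp: split_beta)
  moreover have "poly_fun \<dots>"
    by (intro pf_if poly_fun.pf_const pf_snd_snd)
  ultimately show ?case by metis
next
  case (pf_add f g) show ?case using pf_add.IH by (rule poly_fun.pf_add)
next
  case (pf_mult f g) show ?case using pf_mult.IH by (rule poly_fun.pf_mult)
qed

lemma poly_fun_cont:
  assumes "poly_fun f"
    and "\<And>i j. (\<lambda>k. fst (X k) i j) \<longlonglongrightarrow> fst x i j"
    and "\<And>i j. (\<lambda>k. fst (snd (X k)) i j) \<longlonglongrightarrow> fst (snd x) i j"
    and "\<And>i j. (\<lambda>k. snd (snd (X k)) i j) \<longlonglongrightarrow> snd (snd x) i j"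
  shows "(\<lambda>k. f (X k)) \<longlonglongrightarrow> f x"
  using assms
proof (induction f rule: poly_fun.induct)
  case (pf_const c) then show ?case by simp
next
  case (pf_B i j) then show ?case by (simp add: split_beta)
next
  case (pf_psi i j) then show ?case by (simp add: split_beta)
next
  case (pf_psib i j) then show ?case by (simp add: split_beta)
next
  case (pf_add f g) then show ?case by (intro tendsto_add) auto
next
  case (pf_mult f g) then show ?case by (intro tendsto_mult) auto
qed

definition Tset :: "nat \<Rightarrow> nat \<Rightarrow> rep set" where
  "Tset N K = {x \<in> Rep N K. (\<forall>i j. i < j \<and> j < N \<longrightarrow> fst x i j = (\<Sum>a<K. fst (snd x) i a * snd (snd x) a j))
     \<and> (\<forall>i j. j < i \<and> i < N \<longrightarrow> fst x i j = - (\<Sum>a<K. fst (snd x) i a * snd (snd x) a j))}"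

lemma Tset_mult_map:
  assumes "x \<in> Tset (N1 + N2) K"
  shows "\<exists>x1\<in>Rep N1 K. \<exists>x2\<in>Rep N2 K. x = mult_map N1 N2 K x1 x2"
proof -
  obtain B p q where x: "x = (B, p, q)" by (cases x) auto
  have sB: "supported (N1+N2) (N1+N2) B" and sp: "supported (N1+N2) K p" and sq: "supported K (N1+N2) q"
    using assms unfolding x Tset_def Rep_def by auto
  have up: "B i j = (\<Sum>a<K. p i a * q a j)" if "i < j" "j < N1 + N2" for i j
    using assms that unfolding x Tset_def by auto
  have lo: "B i j = - (\<Sum>a<K. p i a * q a j)" if "j < i" "i < N1 + N2" for i j
    using assms that unfolding x Tset_def by auto
  define x1 where "x1 = ((\<lambda>i j. if i < N1 \<and> j < N1 then B i j else 0),
     (\<lambda>i a. if i < N1 then p i a else 0), (\<lambda>a j. if j < N1 then q a j else 0))"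
  define x2 where "x2 = ((\<lambda>i j. if i < N2 \<and> j < N2 then B (i + N1) (j + N1) else 0),
     (\<lambda>i a. if i < N2 then p (i + N1) a else 0), (\<lambda>a j. if j < N2 then q a (j + N1) else 0))"
  have x1R: "x1 \<in> Rep N1 K" unfolding x1_def Rep_def supported_def using sp sq
    unfolding supported_def by auto
  have x2R: "x2 \<in> Rep N2 K" unfolding x2_def Rep_def supported_def using sp sq
    unfolding supported_def by auto
  have "mult_map N1 N2 K x1 x2 = (B, p, q)"
    unfolding mult_map_def x1_def x2_def prod.case
  proof (intro prod_eqI ext, goal_cases)
    case (1 i j)
    show ?case
    proof -
      consider "i < N1 \<and> j < N1" | "i < N1 \<and> N1 \<le> j \<and> j < N1 + N2" | "N1 \<le> i \<and> i < N1 + N2 \<and> j < N1"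
        | "N1 \<le> i \<and> i < N1 + N2 \<and> N1 \<le> j \<and> j < N1 + N2" | "\<not> (i < N1 + N2 \<and> j < N1 + N2)" by linarith
      then show ?thesis
      proof cases
        case 2
        then have "j - N1 < N2" "j - N1 + N1 = j" by auto
        have l: "B i j = (\<Sum>a<K. p i a * q a j)" by (rule up) (use 2 in auto)
        show ?thesis using 2 \<open>j - N1 < N2\<close> \<open>j - N1 + N1 = j\<close> by (simp add: l le_add_diff_inverse2 less_diff_conv2)
      next
        case 3
        then have "i - N1 < N2" "i - N1 + N1 = i" by auto
        have l: "B i j = - (\<Sum>a<K. p i a * q a j)" by (rule lo) (use 3 in auto)
        show ?thesis using 3 \<open>i - N1 < N2\<close> \<open>i - N1 + N1 = i\<close> by (simp add: l le_add_diff_inverse2 less_diff_conv2)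
      next
        case 5 then show ?thesis using sB unfolding supported_def by auto
      qed auto
    qed
  next
    case (2 i a)
    then show ?case using sp unfolding supported_def by auto
  next
    case (3 a j)
    then show ?case using sq unfolding supported_def by auto
  qed
  then show ?thesis using x1R x2R unfolding x by metis
qed

lemma mult_map_Rep:
  assumes "x1 \<in> Rep N1 K" "x2 \<in> Rep N2 K"
  shows "mult_map N1 N2 K x1 x2 \<in> Rep (N1 + N2) K"
  using assms unfolding Rep_def mult_map_def supported_def by (auto split: prod.splits)

lemma mult_map_Tset:
  assumes x1: "x1 \<in> Rep 1 K" and x2: "x2 \<in> Tset N K"
  shows "mult_map 1 N K x1 x2 \<in> Tset (Suc N) K"
proof -
  obtain B1 p1 q1 where e1: "x1 = (B1, p1, q1)" by (cases x1) auto
  obtain B2 p2 q2 where e2: "x2 = (B2, p2, q2)" by (cases x2) auto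
  have R2: "x2 \<in> Rep N K" using x2 unfolding Tset_def by auto
  have up: "B2 i j = (\<Sum>a<K. p2 i a * q2 a j)" if "i < j" "j < N" for i j
    using x2 that unfolding e2 Tset_def by auto
  have lo: "B2 i j = - (\<Sum>a<K. p2 i a * q2 a j)" if "j < i" "i < N" for i j
    using x2 that unfolding e2 Tset_def by auto
  have R: "mult_map 1 N K x1 x2 \<in> Rep (Suc N) K" using mult_map_Rep[OF x1 R2] by simp
  show ?thesis unfolding Tset_def
  proof (intro CollectI conjI allI impI R)
    fix i j assume ij: "i < j \<and> j < Suc N"
    show "fst (mult_map 1 N K x1 x2) i j = (\<Sum>a<K. fst (snd (mult_map 1 N K x1 x2)) i a * snd (snd (mult_map 1 N K x1 x2)) a j)"
    proof (cases "i = 0")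
      case True then show ?thesis using ij unfolding e1 e2 mult_map_def by simp
    next
      case False
      then have "i - 1 < j - 1" "j - 1 < N" using ij by auto
      then show ?thesis using ij False up[of "i - 1" "j - 1"] unfolding e1 e2 mult_map_def by simp
    qed
  next
    fix i j assume ij: "j < i \<and> i < Suc N"
    show "fst (mult_map 1 N K x1 x2) i j = - (\<Sum>a<K. fst (snd (mult_map 1 N K x1 x2)) i a * snd (snd (mult_map 1 N K x1 x2)) a j)"
    proof (cases "j = 0")
      case True then show ?thesis using ij unfolding e1 e2 mult_map_def by simp
    next
      case False
      have "j - 1 < i - 1" "i - 1 < N" using ij False by auto
      then have l: "B2 (i - Suc 0) (j - Suc 0) = - (\<Sum>a<K. p2 (i - Suc 0) a * q2 a (j - Suc 0))" using lo by simp
      show ?thesis using ij False unfolding e1 e2 mult_map_def by (simp add: l)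
    qed
  qed
qed

definition ext1 :: "cmat \<Rightarrow> cmat" where
  "ext1 g = (\<lambda>i j. if i = 0 \<and> j = 0 then 1 else if 0 < i \<and> 0 < j then g (i - 1) (j - 1) else 0)"

lemma mmul_ext1_left:
  "mmul (Suc N) (ext1 g) X i j = (if i = 0 then X 0 j else (\<Sum>l<N. g (i - 1) l * X (Suc l) j))"
  unfolding mmul_def ext1_def sum.lessThan_Suc_shift by simp

lemma mmul_ext1_right:
  "mmul (Suc N) X (ext1 h) i j = (if j = 0 then X i 0 else (\<Sum>l<N. X i (Suc l) * h l (j - 1)))"
  unfolding mmul_def ext1_def sum.lessThan_Suc_shift by simp

lemma mmul_supp: "supported r n A \<Longrightarrow> supported n c C \<Longrightarrow> supported r c (mmul n A C)"
  unfolding supported_def mmul_def by auto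

lemma act_Rep: "GL_pair N g h \<Longrightarrow> x \<in> Rep N K \<Longrightarrow> act N K g h x \<in> Rep N K"
  unfolding GL_pair_def Rep_def act_def by (auto intro!: mmul_supp split: prod.splits)

lemma GL_ext1:
  assumes "GL_pair N g h" shows "GL_pair (Suc N) (ext1 g) (ext1 h)"
proof -
  have sg: "supported N N g" and sh: "supported N N h" and gh: "mmul N g h = idm N" and hg: "mmul N h g = idm N"
    using assms unfolding GL_pair_def by auto
  have s: "supported (Suc N) (Suc N) (ext1 A)" if sA: "supported N N A" for A
    unfolding supported_def
  proof (intro allI impI)
    fix i j assume "\<not> (i < Suc N \<and> j < Suc N)"
    then have "i = 0 \<or> j = 0 \<or> \<not> (i - 1 < N \<and> j - 1 < N)" by auto
    then show "ext1 A i j = 0" using sA \<open>\<not> (i < Suc N \<and> j < Suc N)\<close> unfolding supported_def ext1_def by auto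
  qed
  have m: "mmul (Suc N) (ext1 A) (ext1 C) = idm (Suc N)" if "mmul N A C = idm N" for A C
  proof (intro ext)
    fix i j
    show "mmul (Suc N) (ext1 A) (ext1 C) i j = idm (Suc N) i j"
    proof (cases i)
      case 0 then show ?thesis by (simp add: mmul_ext1_left) (simp add: ext1_def idm_def)
    next
      case (Suc i')
      have "(\<Sum>l<N. A i' l * ext1 C (Suc l) j) = (if j = 0 then 0 else mmul N A C i' (j - 1))"
        unfolding ext1_def mmul_def by auto
      then show ?thesis using Suc that by (auto simp: mmul_ext1_left idm_def)
    qed
  qed
  show ?thesis unfolding GL_pair_def using s[OF sg] s[OF sh] m[OF gh] m[OF hg] by auto
qed

lemma mm_entries:
  assumes x2: "(B2, p2, q2) \<in> Rep N K"
  shows "fst (mult_map 1 N K (B1, p1, q1) (B2, p2, q2)) 0 0 = B1 0 0"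
    "fst (mult_map 1 N K (B1, p1, q1) (B2, p2, q2)) 0 (Suc m) = (\<Sum>a<K. p1 0 a * q2 a m)"
    "fst (mult_map 1 N K (B1, p1, q1) (B2, p2, q2)) (Suc l) 0 = - (\<Sum>a<K. p2 l a * q1 a 0)"
    "fst (mult_map 1 N K (B1, p1, q1) (B2, p2, q2)) (Suc l) (Suc m) = B2 l m"
    "fst (snd (mult_map 1 N K (B1, p1, q1) (B2, p2, q2))) 0 a = p1 0 a"
    "fst (snd (mult_map 1 N K (B1, p1, q1) (B2, p2, q2))) (Suc l) a = p2 l a"
    "snd (snd (mult_map 1 N K (B1, p1, q1) (B2, p2, q2))) a 0 = q1 a 0"
    "snd (snd (mult_map 1 N K (B1, p1, q1) (B2, p2, q2))) a (Suc m) = q2 a m"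
  using x2 unfolding mult_map_def Rep_def supported_def by auto

lemma equivariance:
  assumes gh: "GL_pair N g h" and x2: "x2 \<in> Rep N K"
  shows "mult_map 1 N K x1 (act N K g h x2) = act (Suc N) K (ext1 g) (ext1 h) (mult_map 1 N K x1 x2)"
proof -
  obtain B1 p1 q1 where e1: "x1 = (B1, p1, q1)" by (cases x1) auto
  obtain B2 p2 q2 where e2: "x2 = (B2, p2, q2)" by (cases x2) auto
  have a2: "act N K g h x2 \<in> Rep N K" using act_Rep[OF gh x2] .
  have acte: "act N K g h x2 = (mmul N (mmul N g B2) h, mmul N g p2, mmul N q2 h)"
    unfolding e2 act_def by simp
  define M where "M = mult_map 1 N K x1 x2"
  have Me: "M = (fst M, fst (snd M), snd (snd M))" by simp
  have actM: "act (Suc N) K (ext1 g) (ext1 h) M =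
     (mmul (Suc N) (mmul (Suc N) (ext1 g) (fst M)) (ext1 h), mmul (Suc N) (ext1 g) (fst (snd M)),
      mmul (Suc N) (snd (snd M)) (ext1 h))"
    unfolding act_def by (cases M) simp
  have x2': "(B2, p2, q2) \<in> Rep N K" using x2 e2 by simp
  have a2': "(mmul N (mmul N g B2) h, mmul N g p2, mmul N q2 h) \<in> Rep N K" using a2 acte by simp
  note L = mm_entries[OF a2', of B1 p1 q1]
  note R = mm_entries[OF x2', of B1 p1 q1]
  have Mf: "fst M 0 0 = B1 0 0" "fst M 0 (Suc m) = (\<Sum>a<K. p1 0 a * q2 a m)"
    "fst M (Suc l) 0 = - (\<Sum>a<K. p2 l a * q1 a 0)" "fst M (Suc l) (Suc m) = B2 l m"
    "fst (snd M) 0 a = p1 0 a" "fst (snd M) (Suc l) a = p2 l a"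
    "snd (snd M) a 0 = q1 a 0" "snd (snd M) a (Suc m) = q2 a m" for l m a
    unfolding M_def e1 e2 using R by auto
  show ?thesis
    unfolding acte e1[symmetric] M_def[symmetric] actM
  proof (intro prod_eqI ext, goal_cases)
    case (1 i j)
    show ?case
    proof (cases i; cases j)
      assume "i = 0" "j = 0"
      then show ?thesis unfolding e1 using L by (simp add: mmul_ext1_left mmul_ext1_right Mf)
    next
      fix j' assume "i = 0" "j = Suc j'"
      have "(\<Sum>a<K. p1 0 a * mmul N q2 h a j') = (\<Sum>l<N. (\<Sum>a<K. p1 0 a * q2 a l) * h l j')"
        unfolding mmul_def[of N] by (simp add: sum_distrib_left sum_distrib_right mult.assoc sum.swap[of _ "{..<N}"])
      then show ?thesis using \<open>i = 0\<close> \<open>j = Suc j'\<close> unfolding e1 using L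
        by (simp add: mmul_ext1_left mmul_ext1_right Mf)
    next
      fix i' assume "i = Suc i'" "j = 0"
      have "- (\<Sum>a<K. mmul N g p2 i' a * q1 a 0) = (\<Sum>l<N. g i' l * - (\<Sum>a<K. p2 l a * q1 a 0))"
        unfolding mmul_def[of N] by (simp add: sum_distrib_left sum_distrib_right mult.assoc sum.swap[of _ "{..<N}"] sum_negf)
      then show ?thesis using \<open>i = Suc i'\<close> \<open>j = 0\<close> unfolding e1 using L
        by (simp add: mmul_ext1_left mmul_ext1_right Mf)
    next
      fix i' j' assume "i = Suc i'" "j = Suc j'"
      then show ?thesis unfolding e1 using L
        by (simp add: mmul_ext1_left mmul_ext1_right Mf mmul_def[of N])
    qed
  next
    case (2 i a)
    then show ?case unfolding e1 using L
      by (cases i) (simp_all add: mmul_ext1_left Mf mmul_def[of N])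
  next
    case (3 a j)
    then show ?case unfolding e1 using L
      by (cases j) (simp_all add: mmul_ext1_right Mf mmul_def[of N])
  qed
qed

lemma restrict_invariant:
  assumes inv: "invariant_poly (Suc N) K f" and x1: "x1 \<in> Rep 1 K"
  shows "invariant_poly N K (\<lambda>x2. f (mult_map 1 N K x1 x2))"
  unfolding invariant_poly_def
proof (intro conjI allI impI)
  show "poly_fun (\<lambda>x2. f (mult_map 1 N K x1 x2))"
    using inv unfolding invariant_poly_def by (intro pf_comp_mult_map) auto
next
  fix g h x assume a: "GL_pair N g h \<and> x \<in> Rep N K"
  have "mult_map 1 N K x1 x \<in> Rep (Suc N) K" using mult_map_Rep[OF x1, of x N] a by simp
  then show "f (mult_map 1 N K x1 (act N K g h x)) = f (mult_map 1 N K x1 x)"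
    using inv GL_ext1[of N g h] a unfolding invariant_poly_def equivariance[OF conjunct1[OF a] conjunct2[OF a]]
    by blast
qed

definition tm :: "nat \<Rightarrow> nat \<Rightarrow> cmat \<Rightarrow> complex mat" where
  "tm r c A = mat r c (\<lambda>(i,j). A i j)"

definition fm :: "complex mat \<Rightarrow> cmat" where
  "fm M = (\<lambda>i j. if i < dim_row M \<and> j < dim_col M then M $$ (i,j) else 0)"

lemma tm_carrier[simp]: "tm r c A \<in> carrier_mat r c" unfolding tm_def by simp

lemma tm_index[simp]: "i < r \<Longrightarrow> j < c \<Longrightarrow> tm r c A $$ (i,j) = A i j" unfolding tm_def by simp

lemma fm_tm: "supported r c A \<Longrightarrow> fm (tm r c A) = A"
  unfolding fm_def tm_def supported_def by (auto intro!: ext)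

lemma fm_supp: "M \<in> carrier_mat r c \<Longrightarrow> supported r c (fm M)"
  unfolding fm_def supported_def by auto

lemma fm_index: "M \<in> carrier_mat r c \<Longrightarrow> fm M i j = (if i < r \<and> j < c then M $$ (i,j) else 0)"
  unfolding fm_def by auto

lemma mult_entry_gen:
  fixes X Y :: "complex mat"
  assumes "X \<in> carrier_mat r m" "Y \<in> carrier_mat m c" "i < r" "j < c"
  shows "(X * Y) $$ (i,j) = (\<Sum>l<m. X $$ (i,l) * Y $$ (l,j))"
  using assms by (auto simp: scalar_prod_def lessThan_atLeast0 intro!: sum.cong)

lemma mmul_fm:
  fixes M M' :: "complex mat"
  assumes M: "M \<in> carrier_mat r n" and M': "M' \<in> carrier_mat n c"
  shows "mmul n (fm M) (fm M') = fm (M * M')"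
proof (intro ext)
  fix i j
  show "mmul n (fm M) (fm M') i j = fm (M * M') i j"
  proof (cases "i < r \<and> j < c")
    case True
    then show ?thesis unfolding mmul_def using M M' mult_entry_gen[OF M M', of i j]
      by (auto simp: fm_index[OF M] fm_index[OF M'] fm_index[OF mult_carrier_mat[OF M M']] intro!: sum.cong)
  next
    case False
    then show ?thesis unfolding mmul_def
      by (auto simp: fm_index[OF M] fm_index[OF M'] fm_index[OF mult_carrier_mat[OF M M']])
  qed
qed

lemma idm_fm: "idm n = fm (1\<^sub>m n)"
  unfolding idm_def fm_def by (auto intro!: ext)

lemma core_step:
  assumes inv: "invariant_poly (Suc N) K f"
    and van: "\<forall>x1\<in>Rep 1 K. \<forall>x2\<in>Rep N K. f (mult_map 1 N K x1 x2) = 0"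
    and x: "(B, p, q) \<in> Rep (Suc N) K"
    and Q: "Qp (Suc N) (tm (Suc N) (Suc N) B - tm (Suc N) K p * tm K (Suc N) q)"
  shows "f (B, p, q) = 0"
proof -
  define n where "n = Suc N"
  have n: "0 < n" unfolding n_def by simp
  define Bm where "Bm = tm n n B"
  define Ps where "Ps = tm n K p"
  define Pb where "Pb = tm K n q"
  have Bm: "Bm \<in> carrier_mat n n" and Ps: "Ps \<in> carrier_mat n K" and Pb: "Pb \<in> carrier_mat K n"
    unfolding Bm_def Ps_def Pb_def by auto
  have PP: "Ps * Pb \<in> carrier_mat n n" using Ps Pb by simp
  define Ap where "Ap = Bm + Ps * Pb"
  define Am where "Am = Bm - Ps * Pb"
  have Ap: "Ap \<in> carrier_mat n n" unfolding Ap_def using Bm PP by simp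
  have Am: "Am \<in> carrier_mat n n" unfolding Am_def using Bm PP by (simp add: minus_carrier_mat)
  have QAm: "Qp n Am" using Q unfolding Am_def Bm_def Ps_def Pb_def n_def .
  obtain G H where G: "G \<in> carrier_mat n n" and H: "H \<in> carrier_mat n n" and GH: "G * H = 1\<^sub>m n"
    and HG: "H * G = 1\<^sub>m n" and c1: "\<And>i. 0 < i \<and> i < n \<Longrightarrow> (G * Ap * H) $$ (i,0) = 0"
    and c2: "\<And>j. 0 < j \<and> j < n \<Longrightarrow> (G * Am * H) $$ (0,j) = 0"
    using construct[OF Ap Am n QAm] by blast
  have sB: "supported n n B" and sp: "supported n K p" and sq: "supported K n q"
    using x unfolding Rep_def n_def by auto
  have gl: "GL_pair n (fm G) (fm H)"
    unfolding GL_pair_def using fm_supp[OF G] fm_supp[OF H] mmul_fm[OF G H] mmul_fm[OF H G] GH HG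
    by (simp add: idm_fm)
  define B' where "B' = G * Bm * H"
  define S where "S = G * Ps"
  define T where "T = Pb * H"
  have B': "B' \<in> carrier_mat n n" and S: "S \<in> carrier_mat n K" and T: "T \<in> carrier_mat K n"
    unfolding B'_def S_def T_def using G Bm H Ps Pb by auto
  have ST: "S * T \<in> carrier_mat n n" using S T by simp
  have actx: "act n K (fm G) (fm H) (B, p, q) = (fm B', fm S, fm T)"
  proof -
    have "B = fm Bm" "p = fm Ps" "q = fm Pb" unfolding Bm_def Ps_def Pb_def using sB sp sq by (auto simp: fm_tm)
    moreover have "mmul n (mmul n (fm G) (fm Bm)) (fm H) = fm B'"
      unfolding B'_def using mmul_fm[OF G Bm] mmul_fm[OF mult_carrier_mat[OF G Bm] H] by simp
    moreover have "mmul n (fm G) (fm Ps) = fm S" unfolding S_def using mmul_fm[OF G Ps] .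
    moreover have "mmul n (fm Pb) (fm H) = fm T" unfolding T_def using mmul_fm[OF Pb H] .
    ultimately show ?thesis unfolding act_def by simp
  qed
  have triple: "G * (Ps * Pb) * H = S * T"
  proof -
    have "G * (Ps * Pb) * H = G * ((Ps * Pb) * H)" using G PP H by (rule assoc_mult_mat)
    also have "(Ps * Pb) * H = Ps * (Pb * H)" using Ps Pb H by (rule assoc_mult_mat)
    also have "G * (Ps * (Pb * H)) = (G * Ps) * (Pb * H)"
      using G Ps mult_carrier_mat[OF Pb H] by (rule assoc_mult_mat[symmetric])
    finally show ?thesis unfolding S_def T_def .
  qed
  have eAp: "G * Ap * H = B' + S * T"
  proof -
    have "G * Ap = G * Bm + G * (Ps * Pb)" unfolding Ap_def using G Bm PP by (rule mult_add_distrib_mat)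
    then have "G * Ap * H = (G * Bm + G * (Ps * Pb)) * H" by simp
    also have "\<dots> = G * Bm * H + G * (Ps * Pb) * H"
      using G Bm PP H by (intro add_mult_distrib_mat[of _ n n]) auto
    finally show ?thesis unfolding B'_def triple .
  qed
  have eAm: "G * Am * H = B' - S * T"
  proof -
    have "G * Am = G * Bm - G * (Ps * Pb)" unfolding Am_def using G Bm PP by (rule mult_minus_distrib_mat)
    then have "G * Am * H = (G * Bm - G * (Ps * Pb)) * H" by simp
    also have "\<dots> = G * Bm * H - G * (Ps * Pb) * H"
      using G Bm PP H by (intro minus_mult_distrib_mat[of _ n n]) auto
    finally show ?thesis unfolding B'_def triple .
  qed
  have lo: "B' $$ (i,0) = - (\<Sum>a<K. S $$ (i,a) * T $$ (a,0))" if "0 < i" "i < n" for i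
  proof -
    have "(B' + S * T) $$ (i,0) = 0" using c1[of i] that eAp by simp
    then show ?thesis using that n carrier_matD[OF S] carrier_matD[OF T] carrier_matD[OF B'] mult_entry_gen[OF S T, of i 0]
      by (simp add: eq_neg_iff_add_eq_0)
  qed
  have up: "B' $$ (0,j) = (\<Sum>a<K. S $$ (0,a) * T $$ (a,j))" if "0 < j" "j < n" for j
  proof -
    have "(B' - S * T) $$ (0,j) = 0" using c2[of j] that eAm by simp
    then show ?thesis using that n carrier_matD[OF S] carrier_matD[OF T] carrier_matD[OF B'] mult_entry_gen[OF S T, of 0 j]
      by simp
  qed
  define x1 :: rep where "x1 = ((\<lambda>i j. if i = 0 \<and> j = 0 then fm B' 0 0 else 0),
     (\<lambda>i a. if i = 0 then fm S 0 a else 0), (\<lambda>a j. if j = 0 then fm T a 0 else 0))"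
  define B2 :: cmat where "B2 = (\<lambda>i j. fm B' (Suc i) (Suc j))"
  define p2 :: cmat where "p2 = (\<lambda>i a. fm S (Suc i) a)"
  define q2 :: cmat where "q2 = (\<lambda>a j. fm T a (Suc j))"
  have fB': "fm B' i j = (if i < n \<and> j < n then B' $$ (i,j) else 0)" for i j using fm_index[OF B'] .
  have fS: "fm S i j = (if i < n \<and> j < K then S $$ (i,j) else 0)" for i j using fm_index[OF S] .
  have fT: "fm T i j = (if i < K \<and> j < n then T $$ (i,j) else 0)" for i j using fm_index[OF T] .
  have x1R: "x1 \<in> Rep 1 K" unfolding x1_def Rep_def supported_def by (auto simp: fS fT)
  have x2R: "(B2, p2, q2) \<in> Rep N K" unfolding B2_def p2_def q2_def Rep_def supported_def
    by (auto simp: fB' fS fT n_def)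
  have mm: "mult_map 1 N K x1 (B2, p2, q2) = (fm B', fm S, fm T)"
    unfolding x1_def
  proof (intro prod_eqI ext, goal_cases)
    case (1 i j)
    note E = mm_entries[OF x2R, of "\<lambda>i j. if i = 0 \<and> j = 0 then fm B' 0 0 else 0"
       "\<lambda>i a. if i = 0 then fm S 0 a else 0" "\<lambda>a j. if j = 0 then fm T a 0 else 0"]
    show ?case
    proof (cases i; cases j)
      assume "i = 0" "j = 0" then show ?thesis using E by simp
    next
      fix j' assume "i = 0" "j = Suc j'"
      then show ?thesis using E up[of j] n by (auto simp: q2_def fB' fS fT n_def intro!: sum.cong)
    next
      fix i' assume "i = Suc i'" "j = 0"
      then show ?thesis using E lo[of i] n by (auto simp: p2_def fB' fS fT n_def intro!: sum.cong)
    next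
      fix i' j' assume "i = Suc i'" "j = Suc j'"
      then show ?thesis using E by (simp add: B2_def)
    qed
  next
    case (2 i a)
    note E = mm_entries[OF x2R, of "\<lambda>i j. if i = 0 \<and> j = 0 then fm B' 0 0 else 0"
       "\<lambda>i a. if i = 0 then fm S 0 a else 0" "\<lambda>a j. if j = 0 then fm T a 0 else 0"]
    show ?case using E by (cases i) (simp_all add: p2_def)
  next
    case (3 a j)
    note E = mm_entries[OF x2R, of "\<lambda>i j. if i = 0 \<and> j = 0 then fm B' 0 0 else 0"
       "\<lambda>i a. if i = 0 then fm S 0 a else 0" "\<lambda>a j. if j = 0 then fm T a 0 else 0"]
    show ?case using E by (cases j) (simp_all add: q2_def)
  qed
  have "f (B, p, q) = f (act n K (fm G) (fm H) (B, p, q))"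
    using inv gl x unfolding invariant_poly_def n_def by metis
  also have "\<dots> = f (mult_map 1 N K x1 (B2, p2, q2))" unfolding actx mm ..
  also have "\<dots> = 0" using van x1R x2R by blast
  finally show ?thesis .
qed

lemma core:
  assumes inv: "invariant_poly (Suc N) K f"
    and van: "\<forall>x1\<in>Rep 1 K. \<forall>x2\<in>Rep N K. f (mult_map 1 N K x1 x2) = 0"
    and x: "x \<in> Rep (Suc N) K"
  shows "f x = 0"
proof -
  define n where "n = Suc N"
  obtain B p q where e: "x = (B, p, q)" by (cases x) auto
  have sB: "supported n n B" and sp: "supported n K p" and sq: "supported K n q"
    using x unfolding e Rep_def n_def by auto
  define Bm where "Bm = tm n n B"
  define PP where "PP = tm n K p * tm K n q"
  have Bm: "Bm \<in> carrier_mat n n" unfolding Bm_def by simp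
  have PP: "PP \<in> carrier_mat n n" unfolding PP_def using tm_carrier[of n K p] tm_carrier[of K n q] by (rule mult_carrier_mat)
  have Am: "Bm - PP \<in> carrier_mat n n" using Bm PP by (simp add: minus_carrier_mat)
  obtain E where Ec: "\<And>k. E k \<in> carrier_mat n n"
    and Econv: "\<And>i j. i < n \<Longrightarrow> j < n \<Longrightarrow> (\<lambda>k. E k $$ (i,j)) \<longlonglongrightarrow> 0"
    and EQ: "\<And>k. Qp n (Bm - PP + E k)"
    using density[OF Am] by blast
  define Bk where "Bk k = (\<lambda>i j. B i j + fm (E k) i j)" for k
  have BkR: "(Bk k, p, q) \<in> Rep (Suc N) K" for k
    using x fm_supp[OF Ec[of k]] unfolding e Rep_def Bk_def supported_def n_def by auto
  have tmBk: "tm n n (Bk k) = Bm + E k" for k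
    by (rule eq_matI) (use Ec[of k] in \<open>auto simp: Bm_def Bk_def fm_index[OF Ec[of k]] tm_def\<close>)
  have "Qp n (tm n n (Bk k) - PP)" for k
  proof -
    have "tm n n (Bk k) - PP = Bm - PP + E k"
      unfolding tmBk by (rule eq_matI) (use Ec[of k] Bm PP in auto)
    then show ?thesis using EQ by simp
  qed
  then have fk: "f (Bk k, p, q) = 0" for k
    using core_step[OF inv van BkR] unfolding PP_def n_def by blast
  have lim: "(\<lambda>k. f (Bk k, p, q)) \<longlonglongrightarrow> f (B, p, q)"
  proof (rule poly_fun_cont)
    show "poly_fun f" using inv unfolding invariant_poly_def by simp
  next
    fix i j
    show "(\<lambda>k. fst (Bk k, p, q) i j) \<longlonglongrightarrow> fst (B, p, q) i j"
    proof (cases "i < n \<and> j < n")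
      case True
      then have "(\<lambda>k. B i j + E k $$ (i,j)) \<longlonglongrightarrow> B i j + 0"
        by (intro tendsto_add tendsto_const Econv) auto
      then show ?thesis using True by (simp add: Bk_def fm_index[OF Ec])
    next
      case False
      then have "(\<lambda>k. fst (Bk k, p, q) i j) = (\<lambda>k. B i j)" by (auto simp: Bk_def fm_index[OF Ec])
      then show ?thesis by simp
    qed
  qed auto
  have "(\<lambda>k. f (Bk k, p, q)) \<longlonglongrightarrow> 0" using fk by simp
  then have "f (B, p, q) = 0" using lim LIMSEQ_unique by blast
  then show ?thesis unfolding e .
qed

lemma G_all:
  "invariant_poly N K f \<Longrightarrow> (\<forall>x\<in>Tset N K. f x = 0) \<Longrightarrow> x \<in> Rep N K \<Longrightarrow> f x = 0"
proof (induction N arbitrary: f x)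
  case 0
  have "x \<in> Tset 0 K" using 0(3) unfolding Tset_def by auto
  then show ?case using 0(2) by blast
next
  case (Suc N)
  show ?case
  proof (rule core[OF Suc.prems(1) _ Suc.prems(3)], intro ballI)
    fix x1 x2 assume x1: "x1 \<in> Rep 1 K" and x2: "x2 \<in> Rep N K"
    show "f (mult_map 1 N K x1 x2) = 0"
    proof (rule Suc.IH[of "\<lambda>x2. f (mult_map 1 N K x1 x2)"])
      show "invariant_poly N K (\<lambda>x2. f (mult_map 1 N K x1 x2))"
        by (rule restrict_invariant[OF Suc.prems(1) x1])
      show "\<forall>x\<in>Tset N K. f (mult_map 1 N K x1 x) = 0"
        using mult_map_Tset[OF x1] Suc.prems(2) by blast
    qed (rule x2)
  qed
qed

theorem mainTheorem10:
  fixes N1 N2 K :: nat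
  shows "mult_dominant N1 N2 K"
  unfolding mult_dominant_def
proof (intro allI impI ballI)
  fix f x
  assume inv: "invariant_poly (N1 + N2) K f"
    and van: "\<forall>x1\<in>Rep N1 K. \<forall>x2\<in>Rep N2 K. f (mult_map N1 N2 K x1 x2) = 0"
    and x: "x \<in> Rep (N1 + N2) K"
  have "\<forall>y\<in>Tset (N1 + N2) K. f y = 0"
  proof
    fix y assume "y \<in> Tset (N1 + N2) K"
    then obtain x1 x2 where "x1 \<in> Rep N1 K" "x2 \<in> Rep N2 K" "y = mult_map N1 N2 K x1 x2"
      using Tset_mult_map by blast
    then show "f y = 0" using van by blast
  qed
  then show "f x = 0" using G_all[OF inv _ x] by blast
qed

end
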